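(* Let $R$ be a commutative ring, $M$ an $R$-module, $y_1,\ldots,y_r\in R$, $i>0$ an integer, and $I\subseteq R$ an ideal with $I\supseteq(y_1,\ldots,y_r)$. Assume that $I\,H_i(y_A;M)=0$ for all $A\subseteq\{1,\ldots,r\}$. Then $I\,H_{i+1}(y_A;M)=0$ for all $A\subseteq\{1,\ldots,r\}$.
   Context: For $A\subseteq\{1,\ldots,r\}$, $y_A=\{y_j:j\in A\}$ and $H_i(y_A;M)$ denotes the $i$-th Koszul homology of $M$ with respect to the elements $y_A$. *)

theory Defs
  imports Complex_Main
begin

text \<open>A chain of degree i is a function from finite sets of indices to M supported on
  the i-element subsets of A; the coefficient at T stands for e_T tensor m.\<close>

definition koszul_chains :: "nat set \<Rightarrow> nat \<Rightarrow> (nat set \<Rightarrow> 'b::ab_group_add) set" where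
  "koszul_chains A i = {c. \<forall>T. c T \<noteq> 0 \<longrightarrow> T \<subseteq> A \<and> card T = i}"

text \<open>Differential K_i \<rightarrow> K_(i-1):
  d(e_S m) = sum over j in S of (-1)^(number of k in S with k < j) y_j e_(S-{j}) m.
  For i = 0 it is the zero map.\<close>

definition koszul_d ::
  "('a::comm_ring_1 \<Rightarrow> 'b::ab_group_add \<Rightarrow> 'b) \<Rightarrow> (nat \<Rightarrow> 'a) \<Rightarrow> nat set \<Rightarrow> nat
     \<Rightarrow> (nat set \<Rightarrow> 'b) \<Rightarrow> (nat set \<Rightarrow> 'b)" where
  "koszul_d scale y A i c = (\<lambda>T.
     if 0 < i \<and> T \<subseteq> A \<and> card T + 1 = i then
       (\<Sum>j\<in>A - T. scale ((-1) ^ card {k\<in>T. k < j} * y j) (c (insert j T)))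
     else 0)"

definition koszul_cycles ::
  "('a::comm_ring_1 \<Rightarrow> 'b::ab_group_add \<Rightarrow> 'b) \<Rightarrow> (nat \<Rightarrow> 'a) \<Rightarrow> nat set \<Rightarrow> nat
     \<Rightarrow> (nat set \<Rightarrow> 'b) set" where
  "koszul_cycles scale y A i = {c \<in> koszul_chains A i. koszul_d scale y A i c = (\<lambda>_. 0)}"

definition koszul_boundaries ::
  "('a::comm_ring_1 \<Rightarrow> 'b::ab_group_add \<Rightarrow> 'b) \<Rightarrow> (nat \<Rightarrow> 'a) \<Rightarrow> nat set \<Rightarrow> nat
     \<Rightarrow> (nat set \<Rightarrow> 'b) set" where
  "koszul_boundaries scale y A i = koszul_d scale y A (Suc i) ` koszul_chains A (Suc i)"

definition koszul_annihilates ::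
  "('a::comm_ring_1 \<Rightarrow> 'b::ab_group_add \<Rightarrow> 'b) \<Rightarrow> 'a set \<Rightarrow> (nat \<Rightarrow> 'a) \<Rightarrow> nat set \<Rightarrow> nat \<Rightarrow> bool" where
  "koszul_annihilates scale I y A i \<longleftrightarrow>
     (\<forall>a\<in>I. \<forall>z\<in>koszul_cycles scale y A i. (\<lambda>T. scale a (z T)) \<in> koszul_boundaries scale y A i)"

end

theory Submission
  imports Defs
begin

definition ctr :: "('a::comm_ring_1 \<Rightarrow> 'b::ab_group_add \<Rightarrow> 'b) \<Rightarrow> nat \<Rightarrow> (nat set \<Rightarrow> 'b) \<Rightarrow> nat set \<Rightarrow> 'b" where
  "ctr sc j c = (\<lambda>T. if j \<in> T then 0 else sc ((-1) ^ card {k\<in>T. k < j}) (c (insert j T)))"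

definition res :: "nat \<Rightarrow> (nat set \<Rightarrow> 'b::zero) \<Rightarrow> nat set \<Rightarrow> 'b" where
  "res j c = (\<lambda>T. if j \<in> T then 0 else c T)"

definition wedge :: "('a::comm_ring_1 \<Rightarrow> 'b::ab_group_add \<Rightarrow> 'b) \<Rightarrow> nat \<Rightarrow> (nat set \<Rightarrow> 'b) \<Rightarrow> nat set \<Rightarrow> 'b" where
  "wedge sc j G = (\<lambda>T. if j \<in> T then sc ((-1) ^ card {k\<in>T. k < j}) (G (T - {j})) else 0)"

lemma sign_insert:
  assumes "finite T" "j \<notin> T"
  shows "((-1::'a::comm_ring_1) ^ card {k\<in>insert j T. k < l}) =
     (if j < l then - ((-1) ^ card {k\<in>T. k < l}) else (-1) ^ card {k\<in>T. k < l})"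
proof (cases "j < l")
  case True
  have e: "{k\<in>insert j T. k < l} = insert j {k\<in>T. k < l}" using True by auto
  have "card (insert j {k\<in>T. k < l}) = Suc (card {k\<in>T. k < l})"
    using assms by (intro card_insert_disjoint) auto
  then show ?thesis using True e by simp
next
  case False
  have e: "{k\<in>insert j T. k < l} = {k\<in>T. k < l}" using False by auto
  show ?thesis using False e by simp
qed

lemma chains_mono: "c \<in> koszul_chains A n \<Longrightarrow> A \<subseteq> B \<Longrightarrow> c \<in> koszul_chains B n"
  unfolding koszul_chains_def mem_Collect_eq by (meson order_trans)

lemma chainsD0: "c \<in> koszul_chains A n \<Longrightarrow> \<not> (T \<subseteq> A \<and> card T = n) \<Longrightarrow> c T = 0"
  unfolding koszul_chains_def by auto

lemma chainsD: "c \<in> koszul_chains A n \<Longrightarrow> c T \<noteq> 0 \<Longrightarrow> T \<subseteq> A \<and> card T = n"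
  unfolding koszul_chains_def by simp

lemma chains_zero: "(\<lambda>_. 0) \<in> koszul_chains A n"
  unfolding koszul_chains_def by simp

lemma chains_add:
  assumes "c \<in> koszul_chains A n" "e \<in> koszul_chains A n"
  shows "(\<lambda>T. c T + e T) \<in> koszul_chains A n"
  unfolding koszul_chains_def
proof (intro CollectI allI impI)
  fix T assume "c T + e T \<noteq> 0"
  then have "c T \<noteq> 0 \<or> e T \<noteq> 0" by auto
  then show "T \<subseteq> A \<and> card T = n" using assms unfolding koszul_chains_def by blast
qed

lemma chains_diff:
  assumes "c \<in> koszul_chains A n" "e \<in> koszul_chains A n"
  shows "(\<lambda>T. c T - e T) \<in> koszul_chains A n"
  unfolding koszul_chains_def
proof (intro CollectI allI impI)
  fix T assume "c T - e T \<noteq> 0"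
  then have "c T \<noteq> 0 \<or> e T \<noteq> 0" by auto
  then show "T \<subseteq> A \<and> card T = n" using assms unfolding koszul_chains_def by blast
qed

lemma chains_empty: "c \<in> koszul_chains {} (Suc n) \<Longrightarrow> c = (\<lambda>_. 0)"
  unfolding koszul_chains_def by fastforce

lemma res_chain: "c \<in> koszul_chains A n \<Longrightarrow> res j c \<in> koszul_chains (A - {j}) n"
  unfolding koszul_chains_def res_def by auto

context module
begin

lemma chains_scale: "c \<in> koszul_chains A n \<Longrightarrow> (\<lambda>T. scale b (c T)) \<in> koszul_chains A n"
  unfolding koszul_chains_def by (simp, metis scale_zero_right)

lemma ctr_chain:
  assumes "finite A" "c \<in> koszul_chains A (Suc n)"
  shows "ctr scale j c \<in> koszul_chains (A - {j}) n"
  unfolding koszul_chains_def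
proof (intro CollectI allI impI)
  fix T assume h: "ctr scale j c T \<noteq> 0"
  have jT: "j \<notin> T"
  proof
    assume "j \<in> T" then have "ctr scale j c T = 0" unfolding ctr_def by simp
    with h show False by simp
  qed
  have eq: "ctr scale j c T = scale ((-1) ^ card {k\<in>T. k < j}) (c (insert j T))"
    using jT unfolding ctr_def by simp
  have ne: "c (insert j T) \<noteq> 0"
  proof
    assume "c (insert j T) = 0" with eq have "ctr scale j c T = 0" by simp
    with h show False by simp
  qed
  have sc: "insert j T \<subseteq> A \<and> card (insert j T) = Suc n" by (rule chainsD[OF assms(2) ne])
  have TA: "T \<subseteq> A" using sc by simp
  have finT: "finite T" by (rule finite_subset[OF TA assms(1)])
  have "card (insert j T) = Suc (card T)" using finT jT by simp
  then have "card T = n" using sc by simp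
  moreover have "T \<subseteq> A - {j}" using TA jT by auto
  ultimately show "T \<subseteq> A - {j} \<and> card T = n" by simp
qed

lemma wedge_chain:
  assumes "finite A" "G \<in> koszul_chains (A - {j}) n" "j \<in> A"
  shows "wedge scale j G \<in> koszul_chains A (Suc n)"
  unfolding koszul_chains_def
proof (intro CollectI allI impI)
  fix T assume h: "wedge scale j G T \<noteq> 0"
  have jT: "j \<in> T"
  proof (rule ccontr)
    assume "j \<notin> T" then have "wedge scale j G T = 0" unfolding wedge_def by simp
    with h show False by simp
  qed
  have eq: "wedge scale j G T = scale ((-1) ^ card {k\<in>T. k < j}) (G (T - {j}))"
    using jT unfolding wedge_def by simp
  have ne: "G (T - {j}) \<noteq> 0"
  proof
    assume "G (T - {j}) = 0" with eq have "wedge scale j G T = 0" by simp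
    with h show False by simp
  qed
  have sc: "T - {j} \<subseteq> A - {j} \<and> card (T - {j}) = n" by (rule chainsD[OF assms(2) ne])
  have TA: "T \<subseteq> A" using sc jT assms(3) by auto
  have finT: "finite T" by (rule finite_subset[OF TA assms(1)])
  note cd = sc[THEN conjunct2]
  have "card T = Suc (card (T - {j}))" by (rule card.remove[OF finT jT])
  then show "T \<subseteq> A \<and> card T = Suc n" using TA cd by simp
qed

lemma d_zero: "koszul_d scale y A n (\<lambda>_. 0) = (\<lambda>_. 0)"
  unfolding koszul_d_def by auto

lemma d_add: "koszul_d scale y A n (\<lambda>T. c T + e T) = (\<lambda>T. koszul_d scale y A n c T + koszul_d scale y A n e T)"
  unfolding koszul_d_def by (auto simp: scale_right_distrib sum.distrib)

lemma d_diff: "koszul_d scale y A n (\<lambda>T. c T - e T) = (\<lambda>T. koszul_d scale y A n c T - koszul_d scale y A n e T)"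
  unfolding koszul_d_def by (auto simp: scale_right_diff_distrib sum_subtractf)

lemma d_scale: "koszul_d scale y A n (\<lambda>T. scale b (c T)) = (\<lambda>T. scale b (koszul_d scale y A n c T))"
  unfolding koszul_d_def by (auto simp: scale_sum_right mult_ac intro!: sum.cong)

lemma d_restr:
  assumes "finite A" "D \<subseteq> A" "c \<in> koszul_chains D n"
  shows "koszul_d scale y A n c = koszul_d scale y D n c"
proof
  fix T
  have z: "c (insert l T) = 0" if "l \<notin> D" for l
    by (rule chainsD0[OF assms(3)]) (use that in simp)
  show "koszul_d scale y A n c T = koszul_d scale y D n c T"
  proof (cases "T \<subseteq> D")
    case True
    have "(\<Sum>j\<in>A - T. scale ((-1) ^ card {k\<in>T. k < j} * y j) (c (insert j T)))
        = (\<Sum>j\<in>D - T. scale ((-1) ^ card {k\<in>T. k < j} * y j) (c (insert j T)))"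
    proof (rule sum.mono_neutral_right)
      show "finite (A - T)" using assms(1) by simp
      show "D - T \<subseteq> A - T" using assms(2) by auto
      show "\<forall>l\<in>A - T - (D - T). scale ((-1) ^ card {k\<in>T. k < l} * y l) (c (insert l T)) = 0"
      proof
        fix l assume "l \<in> A - T - (D - T)"
        then have "l \<notin> D" by auto
        then show "scale ((-1) ^ card {k\<in>T. k < l} * y l) (c (insert l T)) = 0" by (simp add: z)
      qed
    qed
    then show ?thesis using True assms(2) unfolding koszul_d_def by auto
  next
    case False
    have z2: "c (insert l T) = 0" for l
      by (rule chainsD0[OF assms(3)]) (use False in auto)
    show ?thesis using False unfolding koszul_d_def by (simp add: z2)
  qed
qed

lemma ctr_zero: "ctr scale j (\<lambda>_. 0) = (\<lambda>_. 0)"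
  unfolding ctr_def by auto

lemma ctr_d:
  assumes "finite A" "j \<in> A" "c \<in> koszul_chains A (Suc (Suc n))"
  shows "ctr scale j (koszul_d scale y A (Suc (Suc n)) c) =
         (\<lambda>T. - koszul_d scale y (A - {j}) (Suc n) (ctr scale j c) T)"
proof
  fix T
  show "ctr scale j (koszul_d scale y A (Suc (Suc n)) c) T =
         - koszul_d scale y (A - {j}) (Suc n) (ctr scale j c) T"
  proof (cases "j \<in> T")
    case True
    then show ?thesis unfolding ctr_def koszul_d_def by auto
  next
    case jT: False
    show ?thesis
    proof (cases "T \<subseteq> A - {j} \<and> card T = n")
      case False
      have "\<not> (insert j T \<subseteq> A \<and> card (insert j T) + 1 = Suc (Suc n))"
      proof
        assume a: "insert j T \<subseteq> A \<and> card (insert j T) + 1 = Suc (Suc n)"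
        then have TA: "T \<subseteq> A - {j}" using jT by auto
        have "T \<subseteq> A" using a by simp
        then have "finite T" using assms(1) by (rule finite_subset)
        then have "card (insert j T) = Suc (card T)" using jT by simp
        then have "card T = n" using a by simp
        with TA False show False by simp
      qed
      then show ?thesis using False jT unfolding ctr_def koszul_d_def by auto
    next
      case True
      then have finT: "finite T" using assms(1) by (meson Diff_subset finite_subset)
      have c1: "insert j T \<subseteq> A \<and> card (insert j T) + 1 = Suc (Suc n)"
        using True jT finT assms(2) by auto
      have eqs: "A - insert j T = A - {j} - T" by auto
      have "ctr scale j (koszul_d scale y A (Suc (Suc n)) c) T =
        scale ((-1) ^ card {k\<in>T. k < j}) (\<Sum>l\<in>A - {j} - T. scale ((-1) ^ card {k\<in>insert j T. k < l} * y l) (c (insert l (insert j T))))"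
        using jT c1 unfolding ctr_def koszul_d_def eqs by simp
      also have "\<dots> = (\<Sum>l\<in>A - {j} - T. - scale ((-1) ^ card {k\<in>T. k < l} * y l) (ctr scale j c (insert l T)))"
        unfolding scale_sum_right
      proof (rule sum.cong[OF refl])
        fix l assume l: "l \<in> A - {j} - T"
        then have lj: "l \<noteq> j" "l \<notin> T" "j \<notin> insert l T" using jT by auto
        have "ctr scale j c (insert l T) = scale ((-1) ^ card {k\<in>insert l T. k < j}) (c (insert j (insert l T)))"
          using lj unfolding ctr_def by simp
        moreover have "insert l (insert j T) = insert j (insert l T)" by auto
        moreover have "((-1::'a) ^ card {k\<in>T. k < j}) * ((-1) ^ card {k\<in>insert j T. k < l} * y l)
            = - (((-1) ^ card {k\<in>T. k < l} * y l) * (-1) ^ card {k\<in>insert l T. k < j})"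
          unfolding sign_insert[OF finT jT, of l] sign_insert[OF finT lj(2), of j]
          using lj by (cases "j < l") (auto simp: algebra_simps)
        ultimately show "scale ((-1) ^ card {k\<in>T. k < j}) (scale ((-1) ^ card {k\<in>insert j T. k < l} * y l) (c (insert l (insert j T))))
           = - scale ((-1) ^ card {k\<in>T. k < l} * y l) (ctr scale j c (insert l T))"
          by (simp flip: scale_minus_left)
      qed
      also have "\<dots> = - koszul_d scale y (A - {j}) (Suc n) (ctr scale j c) T"
        using True unfolding koszul_d_def by (simp add: sum_negf)
      finally show ?thesis .
    qed
  qed
qed

lemma res_d:
  assumes "finite A" "j \<in> A" "c \<in> koszul_chains A n" "0 < n"
  shows "res j (koszul_d scale y A n c) =
         (\<lambda>T. koszul_d scale y (A - {j}) n (res j c) T + scale (y j) (ctr scale j c T))"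
proof
  fix T
  show "res j (koszul_d scale y A n c) T =
         koszul_d scale y (A - {j}) n (res j c) T + scale (y j) (ctr scale j c T)"
  proof (cases "j \<in> T")
    case True
    then show ?thesis unfolding ctr_def koszul_d_def res_def by auto
  next
    case jT: False
    show ?thesis
    proof (cases "T \<subseteq> A \<and> card T + 1 = n")
      case False
      have "c (insert j T) = 0"
      proof (rule ccontr)
        assume "c (insert j T) \<noteq> 0"
        then have sc: "insert j T \<subseteq> A \<and> card (insert j T) = n" by (rule chainsD[OF assms(3)])
        have TA: "T \<subseteq> A" using sc by simp
        have finT: "finite T" by (rule finite_subset[OF TA assms(1)])
        have "card (insert j T) = Suc (card T)" using finT jT by simp
        then show False using False sc TA by simp
      qed
      then show ?thesis using False jT unfolding ctr_def koszul_d_def res_def by auto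
    next
      case True
      have eqs: "A - T = insert j (A - {j} - T)" using True jT assms(2) by auto
      have fin: "finite (A - {j} - T)" using assms(1) by auto
      have "res j (koszul_d scale y A n c) T = (\<Sum>l\<in>A - T. scale ((-1) ^ card {k\<in>T. k < l} * y l) (c (insert l T)))"
        using True jT assms(4) unfolding res_def koszul_d_def by simp
      also have "\<dots> = scale ((-1) ^ card {k\<in>T. k < j} * y j) (c (insert j T)) +
          (\<Sum>l\<in>A - {j} - T. scale ((-1) ^ card {k\<in>T. k < l} * y l) (c (insert l T)))"
        unfolding eqs by (rule sum.insert[OF fin]) auto
      also have "(\<Sum>l\<in>A - {j} - T. scale ((-1) ^ card {k\<in>T. k < l} * y l) (c (insert l T)))
          = koszul_d scale y (A - {j}) n (res j c) T"
        using True jT assms(4) unfolding koszul_d_def res_def by (auto intro!: sum.cong)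
      also have "scale ((-1) ^ card {k\<in>T. k < j} * y j) (c (insert j T)) = scale (y j) (ctr scale j c T)"
        using jT unfolding ctr_def by (simp add: mult.commute)
      finally show ?thesis by (simp add: add.commute)
    qed
  qed
qed

lemma decomp: "c = (\<lambda>T. res j c T + wedge scale j (ctr scale j c) T)"
proof
  fix T
  show "c T = res j c T + wedge scale j (ctr scale j c) T"
  proof (cases "j \<in> T")
    case True
    have e: "{k\<in>T - {j}. k < j} = {k\<in>T. k < j}" by auto
    have "((-1::'a) ^ card {k\<in>T. k < j}) * ((-1) ^ card {k\<in>T. k < j}) = 1"
      by (simp flip: power_add add: mult_2[symmetric])
    moreover have e2: "{k\<in>T. k \<noteq> j \<and> k < j} = {k\<in>T. k < j}" by auto
    ultimately show ?thesis using True unfolding res_def wedge_def ctr_def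
      by (simp add: e insert_absorb)
  next
    case False
    then show ?thesis unfolding res_def wedge_def by simp
  qed
qed

lemma ctr_wedge: "(\<And>T. j \<in> T \<Longrightarrow> G T = 0) \<Longrightarrow> ctr scale j (wedge scale j G) = G"
proof
  fix T assume G: "\<And>T. j \<in> T \<Longrightarrow> G T = 0"
  show "ctr scale j (wedge scale j G) T = G T"
  proof (cases "j \<in> T")
    case True then show ?thesis using G unfolding ctr_def by simp
  next
    case False
    have e: "{k\<in>insert j T. k < j} = {k\<in>T. k < j}" by auto
    have "((-1::'a) ^ card {k\<in>T. k < j}) * ((-1) ^ card {k\<in>T. k < j}) = 1"
      by (simp flip: power_add add: mult_2[symmetric])
    moreover have e2: "{k. (k = j \<or> k \<in> T) \<and> k < j} = {k\<in>T. k < j}" by auto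
    ultimately show ?thesis using False unfolding wedge_def ctr_def by (simp add: e)
  qed
qed

lemma res_wedge: "res j (wedge scale j G) = (\<lambda>_. 0)"
  unfolding res_def wedge_def by auto

lemma wedge_neg: "wedge scale j (\<lambda>T. - G T) = (\<lambda>T. - wedge scale j G T)"
  unfolding wedge_def by auto


lemma d_wedge:
  assumes "finite A" "j \<in> A" "G \<in> koszul_chains (A - {j}) (Suc n)"
  shows "koszul_d scale y A (Suc (Suc n)) (wedge scale j G) =
    (\<lambda>T. scale (y j) (G T) - wedge scale j (koszul_d scale y (A - {j}) (Suc n) G) T)"
proof -
  let ?X = "wedge scale j G"
  let ?dX = "koszul_d scale y A (Suc (Suc n)) ?X"
  have X: "?X \<in> koszul_chains A (Suc (Suc n))" by (rule wedge_chain[OF assms(1) assms(3) assms(2)])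
  have Gj: "G T = 0" if "j \<in> T" for T
    by (rule chainsD0[OF assms(3)]) (use that in auto)
  have ce: "ctr scale j ?X = G" by (rule ctr_wedge) (rule Gj)
  have r: "res j ?X = (\<lambda>_. 0)" by (rule res_wedge)
  have e1: "res j ?dX = (\<lambda>T. scale (y j) (G T))"
    using res_d[OF assms(1,2) X, of y] by (simp add: r ce d_zero)
  have e2: "ctr scale j ?dX = (\<lambda>T. - koszul_d scale y (A - {j}) (Suc n) G T)"
    using ctr_d[OF assms(1,2) X, of y] by (simp add: ce)
  have "?dX = (\<lambda>T. res j ?dX T + wedge scale j (ctr scale j ?dX) T)" by (rule decomp)
  also have "\<dots> = (\<lambda>T. scale (y j) (G T) + wedge scale j (\<lambda>T. - koszul_d scale y (A - {j}) (Suc n) G T) T)"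
    by (simp only: e1 e2)
  also have "\<dots> = (\<lambda>T. scale (y j) (G T) - wedge scale j (koszul_d scale y (A - {j}) (Suc n) G) T)"
    by (simp add: wedge_neg)
  finally show ?thesis .
qed

lemma ctr_lin: "ctr scale j (\<lambda>T. scale a (z T) - u T) = (\<lambda>T. scale a (ctr scale j z T) - ctr scale j u T)"
  unfolding ctr_def by (auto simp: scale_right_diff_distrib mult_ac)

lemma inj_step:
  assumes fin: "finite E" and sE: "s \<notin> E" and i: "0 < i"
    and hyp: "\<forall>z\<in>koszul_cycles scale y E i. (\<lambda>T. scale (y s) (z T)) \<in> koszul_boundaries scale y E i"
    and c: "c \<in> koszul_chains E i" and X: "X \<in> koszul_chains (insert s E) (Suc i)"
    and eq: "c = koszul_d scale y (insert s E) (Suc i) X"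
  shows "\<exists>W\<in>koszul_chains E (Suc i). c = koszul_d scale y E (Suc i) W"
proof -
  obtain i' where i': "i = Suc i'" using i by (cases i) auto
  let ?F = "insert s E"
  have finF: "finite ?F" using fin by simp
  have sF: "s \<in> ?F" by simp
  have FE: "?F - {s} = E" using sE by auto
  have cz: "c T = 0" if "s \<in> T" for T
    by (rule chainsD0[OF c]) (use that sE in auto)
  have cs: "ctr scale s c = (\<lambda>_. 0)"
  proof
    fix T show "ctr scale s c T = 0" unfolding ctr_def by (simp add: cz)
  qed
  have X': "X \<in> koszul_chains ?F (Suc (Suc i'))" using X i' by simp
  have "ctr scale s (koszul_d scale y ?F (Suc (Suc i')) X) = (\<lambda>T. - koszul_d scale y E (Suc i') (ctr scale s X) T)"
    using ctr_d[OF finF sF X', of y] FE by simp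
  then have "(\<lambda>_. 0) = (\<lambda>T. - koszul_d scale y E i (ctr scale s X) T)"
    using eq cs i' by simp
  then have dX: "koszul_d scale y E i (ctr scale s X) = (\<lambda>_. 0)"
    by (simp add: fun_eq_iff)
  have cX: "ctr scale s X \<in> koszul_chains E i"
    using ctr_chain[OF finF X, where j=s] FE by simp
  have "ctr scale s X \<in> koszul_cycles scale y E i"
    unfolding koszul_cycles_def using cX dX by simp
  with hyp have "(\<lambda>T. scale (y s) (ctr scale s X T)) \<in> koszul_boundaries scale y E i" by blast
  then obtain W0 where W0: "W0 \<in> koszul_chains E (Suc i)"
    and W0e: "(\<lambda>T. scale (y s) (ctr scale s X T)) = koszul_d scale y E (Suc i) W0"
    unfolding koszul_boundaries_def by auto
  have rc: "res s c = c"
  proof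
    fix T show "res s c T = c T" unfolding res_def by (simp add: cz)
  qed
  have w0: "scale (y s) (ctr scale s X T) = koszul_d scale y E (Suc i) W0 T" for T
    using fun_cong[OF W0e, of T] by simp
  have "c = res s c" using rc by simp
  also have "\<dots> = res s (koszul_d scale y ?F (Suc i) X)" using eq by simp
  also have "\<dots> = (\<lambda>T. koszul_d scale y E (Suc i) (res s X) T + scale (y s) (ctr scale s X T))"
    using res_d[OF finF sF X, of y] FE by simp
  also have "\<dots> = (\<lambda>T. koszul_d scale y E (Suc i) (res s X) T + koszul_d scale y E (Suc i) W0 T)"
    by (simp only: w0)
  also have "\<dots> = koszul_d scale y E (Suc i) (\<lambda>T. res s X T + W0 T)"
    by (simp add: d_add)
  finally have "c = koszul_d scale y E (Suc i) (\<lambda>T. res s X T + W0 T)" .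
  moreover have "(\<lambda>T. res s X T + W0 T) \<in> koszul_chains E (Suc i)"
    using chains_add[OF res_chain[OF X, where j=s, unfolded FE] W0] by simp
  ultimately show ?thesis by blast
qed

lemma inj_gen:
  assumes finS: "finite S" and finE: "finite E"
    and H: "\<And>E' s. E' \<subseteq> F0 \<Longrightarrow> s \<in> F0 \<Longrightarrow>
       \<forall>z\<in>koszul_cycles scale y E' i. (\<lambda>T. scale (y s) (z T)) \<in> koszul_boundaries scale y E' i"
    and i: "0 < i" and c: "c \<in> koszul_chains E i"
  shows "E \<union> S \<subseteq> F0 \<Longrightarrow> X \<in> koszul_chains (E \<union> S) (Suc i) \<Longrightarrow>
     c = koszul_d scale y (E \<union> S) (Suc i) X \<Longrightarrow> \<exists>W\<in>koszul_chains E (Suc i). c = koszul_d scale y E (Suc i) W"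
  using finS
proof (induction S arbitrary: X rule: finite_induct)
  case empty
  then show ?case by auto
next
  case (insert s S)
  show ?case
  proof (cases "s \<in> E \<union> S")
    case True
    then have "E \<union> insert s S = E \<union> S" by auto
    then show ?thesis using insert.IH insert.prems by simp
  next
    case False
    have eqset: "E \<union> insert s S = insert s (E \<union> S)" by auto
    have sub: "E \<union> S \<subseteq> F0" "s \<in> F0" using insert.prems(1) by auto
    have "\<exists>W\<in>koszul_chains (E \<union> S) (Suc i). c = koszul_d scale y (E \<union> S) (Suc i) W"
    proof (rule inj_step[OF _ False i])
      show "finite (E \<union> S)" using finE insert.hyps(1) by simp
      show "\<forall>z\<in>koszul_cycles scale y (E \<union> S) i. (\<lambda>T. scale (y s) (z T)) \<in> koszul_boundaries scale y (E \<union> S) i"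
        by (rule H[OF sub])
      show "c \<in> koszul_chains (E \<union> S) i" by (rule chains_mono[OF c]) auto
      show "X \<in> koszul_chains (insert s (E \<union> S)) (Suc i)" using insert.prems(2) eqset by simp
      show "c = koszul_d scale y (insert s (E \<union> S)) (Suc i) X" using insert.prems(3) eqset by simp
    qed
    then obtain W where "W \<in> koszul_chains (E \<union> S) (Suc i)" "c = koszul_d scale y (E \<union> S) (Suc i) W" by blast
    then show ?thesis using insert.IH sub(1) by blast
  qed
qed

end


theorem corollary2p2:
  fixes scale :: "'a::comm_ring_1 \<Rightarrow> 'b::ab_group_add \<Rightarrow> 'b"
    and y :: "nat \<Rightarrow> 'a" and r i :: nat and I :: "'a set"
  assumes "module scale"
    and "0 < i"
    and "module.subspace ((*) :: 'a \<Rightarrow> 'a \<Rightarrow> 'a) I"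
    and "\<forall>j\<in>{1..r}. y j \<in> I"
    and "\<forall>A. A \<subseteq> {1..r} \<longrightarrow> koszul_annihilates scale I y A i"
  shows "\<forall>A. A \<subseteq> {1..r} \<longrightarrow> koszul_annihilates scale I y A (Suc i)"
proof (intro allI impI)
  interpret m: module scale by (rule assms(1))
  fix A :: "nat set" assume A: "A \<subseteq> {1..r}"
  have finA: "finite A" using A by (rule finite_subset) simp
  obtain i' where i': "i = Suc i'" using assms(2) by (cases i) auto
  have H: "\<forall>z\<in>koszul_cycles scale y E' i. (\<lambda>T. scale (y s) (z T)) \<in> koszul_boundaries scale y E' i"
    if "E' \<subseteq> {1..r}" "s \<in> {1..r}" for E' s
  proof -
    have "y s \<in> I" using assms(4) that(2) by blast
    moreover have "koszul_annihilates scale I y E' i" using assms(5) that(1) by blast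
    ultimately show ?thesis unfolding koszul_annihilates_def by blast
  qed
  show "koszul_annihilates scale I y A (Suc i)" unfolding koszul_annihilates_def
  proof (intro ballI)
    fix a z assume a: "a \<in> I" and z: "z \<in> koszul_cycles scale y A (Suc i)"
    have zc: "z \<in> koszul_chains A (Suc i)" and zd: "koszul_d scale y A (Suc i) z = (\<lambda>_. 0)"
      using z unfolding koszul_cycles_def by auto
    have Ha: "\<forall>z\<in>koszul_cycles scale y E' i. (\<lambda>T. scale a (z T)) \<in> koszul_boundaries scale y E' i"
      if "E' \<subseteq> {1..r}" for E'
    proof -
      have "koszul_annihilates scale I y E' i" using assms(5) that by blast
      then show ?thesis using a unfolding koszul_annihilates_def by blast
    qed
    have claim: "\<exists>u X. u \<in> koszul_chains (A - S) (Suc i) \<and> koszul_d scale y (A - S) (Suc i) u = (\<lambda>_. 0)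
        \<and> X \<in> koszul_chains A (Suc (Suc i))
        \<and> (\<lambda>T. scale a (z T) - u T) = koszul_d scale y A (Suc (Suc i)) X"
      if "finite S" "S \<subseteq> A" for S
      using that
    proof (induction S rule: finite_induct)
      case empty
      have "(\<lambda>T. scale a (z T)) \<in> koszul_chains (A - {}) (Suc i)" using m.chains_scale[OF zc] by simp
      moreover have "koszul_d scale y (A - {}) (Suc i) (\<lambda>T. scale a (z T)) = (\<lambda>_. 0)"
        using zd by (simp add: m.d_scale)
      moreover have "(\<lambda>_. 0) \<in> koszul_chains A (Suc (Suc i))" by (rule chains_zero)
      moreover have "(\<lambda>T. scale a (z T) - scale a (z T)) = koszul_d scale y A (Suc (Suc i)) (\<lambda>_. 0)"
        by (simp add: m.d_zero)
      ultimately show ?case by blast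
    next
      case (insert j S)
      have SA: "S \<subseteq> A" and jA: "j \<in> A" using insert.prems by auto
      obtain u X where uc: "u \<in> koszul_chains (A - S) (Suc i)"
        and ud: "koszul_d scale y (A - S) (Suc i) u = (\<lambda>_. 0)"
        and Xc: "X \<in> koszul_chains A (Suc (Suc i))"
        and XE: "(\<lambda>T. scale a (z T) - u T) = koszul_d scale y A (Suc (Suc i)) X"
        using insert.IH[OF SA] by blast
      define D where "D = A - S"
      define C where "C = D - {j}"
      have jD: "j \<in> D" unfolding D_def using jA insert.hyps(2) by auto
      have finD: "finite D" unfolding D_def using finA by simp
      have DA: "D \<subseteq> A" unfolding D_def by auto
      have CA: "A - insert j S = C" unfolding C_def D_def by auto
      have CS: "C \<union> S = A - {j}" unfolding C_def D_def using SA insert.hyps(2) by auto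
      have finC: "finite C" unfolding C_def using finD by simp
      have uc': "u \<in> koszul_chains D (Suc i)" using uc unfolding D_def .
      have ud': "koszul_d scale y D (Suc i) u = (\<lambda>_. 0)" using ud unfolding D_def .
      define u1 where "u1 = ctr scale j u"
      have u1c: "u1 \<in> koszul_chains C i"
        unfolding u1_def C_def by (rule m.ctr_chain[OF finD uc'])
      have zc': "z \<in> koszul_chains A (Suc (Suc i'))" using zc i' by simp
      have "ctr scale j (koszul_d scale y A (Suc (Suc i')) z) =
          (\<lambda>T. - koszul_d scale y (A - {j}) (Suc i') (ctr scale j z) T)"
        by (rule m.ctr_d[OF finA jA zc'])
      then have "(\<lambda>_. 0) = (\<lambda>T. - koszul_d scale y (A - {j}) i (ctr scale j z) T)"
        using zd i' by (simp add: m.ctr_zero)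
      then have zjd: "koszul_d scale y (A - {j}) i (ctr scale j z) = (\<lambda>_. 0)"
        by (simp add: fun_eq_iff)
      have zjc: "ctr scale j z \<in> koszul_chains (A - {j}) i"
        by (rule m.ctr_chain[OF finA zc])
      have "ctr scale j z \<in> koszul_cycles scale y (A - {j}) i"
        unfolding koszul_cycles_def using zjc zjd by simp
      moreover have "A - {j} \<subseteq> {1..r}" using A by auto
      ultimately have "(\<lambda>T. scale a (ctr scale j z T)) \<in> koszul_boundaries scale y (A - {j}) i"
        using Ha by blast
      then obtain W where Wc: "W \<in> koszul_chains (A - {j}) (Suc i)"
        and We: "(\<lambda>T. scale a (ctr scale j z T)) = koszul_d scale y (A - {j}) (Suc i) W"
        unfolding koszul_boundaries_def by auto
      have "ctr scale j (\<lambda>T. scale a (z T) - u T) = ctr scale j (koszul_d scale y A (Suc (Suc i)) X)"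
        using XE by simp
      then have rel: "(\<lambda>T. scale a (ctr scale j z T) - ctr scale j u T) =
          (\<lambda>T. - koszul_d scale y (A - {j}) (Suc i) (ctr scale j X) T)"
        using m.ctr_d[OF finA jA Xc, of y] by (simp add: m.ctr_lin)
      have u1e: "u1 = koszul_d scale y (A - {j}) (Suc i) (\<lambda>T. W T + ctr scale j X T)"
      proof
        fix T
        have r1: "scale a (ctr scale j z T) - ctr scale j u T = - koszul_d scale y (A - {j}) (Suc i) (ctr scale j X) T"
          using fun_cong[OF rel, of T] by simp
        have r2: "scale a (ctr scale j z T) = koszul_d scale y (A - {j}) (Suc i) W T"
          using fun_cong[OF We, of T] by simp
        have "u1 T = koszul_d scale y (A - {j}) (Suc i) W T + koszul_d scale y (A - {j}) (Suc i) (ctr scale j X) T"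
          using r1 r2 unfolding u1_def by (simp add: algebra_simps)
        then show "u1 T = koszul_d scale y (A - {j}) (Suc i) (\<lambda>T. W T + ctr scale j X T) T"
          by (simp add: m.d_add)
      qed
      have WXc: "(\<lambda>T. W T + ctr scale j X T) \<in> koszul_chains (A - {j}) (Suc i)"
        by (rule chains_add[OF Wc m.ctr_chain[OF finA Xc]])
      have "\<exists>G\<in>koszul_chains C (Suc i). u1 = koszul_d scale y C (Suc i) G"
      proof (rule m.inj_gen[OF insert.hyps(1) finC _ assms(2) u1c])
        show "\<And>E' s. E' \<subseteq> {1..r} \<Longrightarrow> s \<in> {1..r} \<Longrightarrow>
          \<forall>z\<in>koszul_cycles scale y E' i. (\<lambda>T. scale (y s) (z T)) \<in> koszul_boundaries scale y E' i"
          by (rule H)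
        show "C \<union> S \<subseteq> {1..r}" using CS A by auto
        show "(\<lambda>T. W T + ctr scale j X T) \<in> koszul_chains (C \<union> S) (Suc i)" using WXc CS by simp
        show "u1 = koszul_d scale y (C \<union> S) (Suc i) (\<lambda>T. W T + ctr scale j X T)" using u1e CS by simp
      qed
      then obtain G where Gc: "G \<in> koszul_chains C (Suc i)" and Ge: "u1 = koszul_d scale y C (Suc i) G"
        by blast
      have Gc': "G \<in> koszul_chains (D - {j}) (Suc i)" using Gc unfolding C_def .
      define u' where "u' = (\<lambda>T. res j u T + scale (y j) (G T))"
      have u'c: "u' \<in> koszul_chains C (Suc i)"
        unfolding u'_def C_def by (rule chains_add[OF res_chain[OF uc'] m.chains_scale[OF Gc']])
      have u'd: "koszul_d scale y C (Suc i) u' = (\<lambda>_. 0)"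
      proof -
        have "koszul_d scale y C (Suc i) u' =
            (\<lambda>T. koszul_d scale y C (Suc i) (res j u) T + scale (y j) (koszul_d scale y C (Suc i) G T))"
          unfolding u'_def by (simp add: m.d_add m.d_scale)
        also have "\<dots> = (\<lambda>T. koszul_d scale y C (Suc i) (res j u) T + scale (y j) (ctr scale j u T))"
          using Ge unfolding u1_def by simp
        also have "\<dots> = res j (koszul_d scale y D (Suc i) u)"
          unfolding C_def by (rule m.res_d[OF finD jD uc', symmetric]) simp
        also have "\<dots> = (\<lambda>_. 0)" unfolding ud' res_def by simp
        finally show ?thesis .
      qed
      have wc: "wedge scale j G \<in> koszul_chains D (Suc (Suc i))"
        by (rule m.wedge_chain[OF finD Gc' jD])
      define X' where "X' = (\<lambda>T. X T - wedge scale j G T)"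
      have X'c: "X' \<in> koszul_chains A (Suc (Suc i))"
        unfolding X'_def by (rule chains_diff[OF Xc chains_mono[OF wc DA]])
      have dW: "koszul_d scale y A (Suc (Suc i)) (wedge scale j G) =
          (\<lambda>T. scale (y j) (G T) - wedge scale j u1 T)"
        using m.d_restr[OF finA DA wc, of y] m.d_wedge[OF finD jD Gc', of y] Ge
        unfolding C_def by simp
      have dec: "u T = res j u T + wedge scale j u1 T" for T
        using fun_cong[OF m.decomp[of u j], of T] unfolding u1_def by simp
      have "(\<lambda>T. scale a (z T) - u' T) = koszul_d scale y A (Suc (Suc i)) X'"
      proof
        fix T
        have "koszul_d scale y A (Suc (Suc i)) X' T =
            koszul_d scale y A (Suc (Suc i)) X T - koszul_d scale y A (Suc (Suc i)) (wedge scale j G) T"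
          unfolding X'_def by (simp add: m.d_diff)
        also have "\<dots> = (scale a (z T) - u T) - (scale (y j) (G T) - wedge scale j u1 T)"
          using fun_cong[OF XE, of T] dW by simp
        also have "\<dots> = scale a (z T) - u' T"
          unfolding u'_def using dec[of T] by (simp add: algebra_simps)
        finally show "scale a (z T) - u' T = koszul_d scale y A (Suc (Suc i)) X' T" by simp
      qed
      then show ?case using u'c u'd X'c CA by auto
    qed
    from claim[OF finA order_refl] obtain u X where uc: "u \<in> koszul_chains (A - A) (Suc i)"
      and Xc: "X \<in> koszul_chains A (Suc (Suc i))"
      and XE: "(\<lambda>T. scale a (z T) - u T) = koszul_d scale y A (Suc (Suc i)) X" by blast
    have "u = (\<lambda>_. 0)" using uc by (intro chains_empty) simp
    then have "(\<lambda>T. scale a (z T)) = koszul_d scale y A (Suc (Suc i)) X" using XE by simp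
    then show "(\<lambda>T. scale a (z T)) \<in> koszul_boundaries scale y A (Suc i)"
      unfolding koszul_boundaries_def using Xc by blast
  qed
qed

end
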